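(* Let $G=(V,E)$ be an undirected graph, $k$ a positive integer, and $f:V\to\mathbb{Z}\cup\{-\infty\}$, $g:V\to\mathbb{Z}\cup\{+\infty\}$ with $f\le g$. A $k$-edge-connected $(f,g)$-bounded orientation $D$ of $G$ is decreasingly minimal among all $k$-edge-connected $(f,g)$-bounded orientations of $G$ if and only if there are no two nodes $s,t$ for which $\varrho_D(t)\ge\varrho_D(s)+2$, $\varrho_D(t)>f(t)$, $\varrho_D(s)<g(s)$, and $D$ contains $k+1$ arc-disjoint directed paths from $s$ to $t$.
   Context: $\varrho_D(v)$ is the number of arcs with head $v$; $D$ is $(f,g)$-bounded if $f(v)\le\varrho_D(v)\le g(v)$ for all $v$; $D$ is $k$-edge-connected if every non-empty proper subset of $V$ has at least $k$ entering arcs. Decreasingly minimal: in-degree vector with largest component as small as possible within the class, then second largest, etc. *)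

theory Defs
  imports Complex_Main "HOL-Library.Extended_Real" "HOL-Library.Multiset"
begin

text \<open>An undirected multigraph G = (V, E): a finite vertex set V, a finite edge
  index set E, and for each edge e its two end-nodes ends e (an unordered pair,
  given as an ordered pair whose order is immaterial).  An orientation D assigns
  to each edge a direction: D e = True orients e from fst (ends e) to snd (ends e),
  D e = False orients it the other way.\<close>

definition tail :: "('e \<Rightarrow> 'a \<times> 'a) \<Rightarrow> ('e \<Rightarrow> bool) \<Rightarrow> 'e \<Rightarrow> 'a" where
  "tail ends D e = (if D e then fst (ends e) else snd (ends e))"

definition head :: "('e \<Rightarrow> 'a \<times> 'a) \<Rightarrow> ('e \<Rightarrow> bool) \<Rightarrow> 'e \<Rightarrow> 'a" where
  "head ends D e = (if D e then snd (ends e) else fst (ends e))"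

definition indeg :: "'e set \<Rightarrow> ('e \<Rightarrow> 'a \<times> 'a) \<Rightarrow> ('e \<Rightarrow> bool) \<Rightarrow> 'a \<Rightarrow> nat" where
  "indeg E ends D v = card {e \<in> E. head ends D e = v}"

definition fg_bounded ::
  "'a set \<Rightarrow> 'e set \<Rightarrow> ('e \<Rightarrow> 'a \<times> 'a) \<Rightarrow> ('a \<Rightarrow> ereal) \<Rightarrow> ('a \<Rightarrow> ereal) \<Rightarrow> ('e \<Rightarrow> bool) \<Rightarrow> bool" where
  "fg_bounded V E ends f g D \<longleftrightarrow>
     (\<forall>v\<in>V. f v \<le> ereal (real (indeg E ends D v)) \<and> ereal (real (indeg E ends D v)) \<le> g v)"

definition k_edge_connected ::
  "nat \<Rightarrow> 'a set \<Rightarrow> 'e set \<Rightarrow> ('e \<Rightarrow> 'a \<times> 'a) \<Rightarrow> ('e \<Rightarrow> bool) \<Rightarrow> bool" where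
  "k_edge_connected k V E ends D \<longleftrightarrow>
     (\<forall>X. X \<subseteq> V \<and> X \<noteq> {} \<and> X \<noteq> V \<longrightarrow>
        k \<le> card {e \<in> E. head ends D e \<in> X \<and> tail ends D e \<notin> X})"

definition indeg_desc :: "'a set \<Rightarrow> 'e set \<Rightarrow> ('e \<Rightarrow> 'a \<times> 'a) \<Rightarrow> ('e \<Rightarrow> bool) \<Rightarrow> nat list" where
  "indeg_desc V E ends D = rev (sorted_list_of_multiset (image_mset (indeg E ends D) (mset_set V)))"

definition lex_less :: "nat list \<Rightarrow> nat list \<Rightarrow> bool" where
  "lex_less xs ys \<longleftrightarrow> (\<exists>i < length xs. take i xs = take i ys \<and> xs ! i < ys ! i)"

definition dec_min ::
  "'a set \<Rightarrow> 'e set \<Rightarrow> ('e \<Rightarrow> 'a \<times> 'a) \<Rightarrow> (('e \<Rightarrow> bool) \<Rightarrow> bool) \<Rightarrow> ('e \<Rightarrow> bool) \<Rightarrow> bool" where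
  "dec_min V E ends P D \<longleftrightarrow> P D \<and>
     \<not> (\<exists>D'. P D' \<and> lex_less (indeg_desc V E ends D') (indeg_desc V E ends D))"

definition dir_path ::
  "'e set \<Rightarrow> ('e \<Rightarrow> 'a \<times> 'a) \<Rightarrow> ('e \<Rightarrow> bool) \<Rightarrow> 'a \<Rightarrow> 'a \<Rightarrow> 'e list \<Rightarrow> bool" where
  "dir_path E ends D s t p \<longleftrightarrow>
     set p \<subseteq> E \<and>
     (p = [] \<longrightarrow> s = t) \<and>
     (p \<noteq> [] \<longrightarrow> tail ends D (hd p) = s \<and> head ends D (last p) = t) \<and>
     (\<forall>i. Suc i < length p \<longrightarrow> head ends D (p ! i) = tail ends D (p ! Suc i)) \<and>
     distinct (s # map (head ends D) p)"

definition arc_disjoint_paths ::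
  "nat \<Rightarrow> 'e set \<Rightarrow> ('e \<Rightarrow> 'a \<times> 'a) \<Rightarrow> ('e \<Rightarrow> bool) \<Rightarrow> 'a \<Rightarrow> 'a \<Rightarrow> bool" where
  "arc_disjoint_paths m E ends D s t \<longleftrightarrow>
     (\<exists>P :: nat \<Rightarrow> 'e list.
        (\<forall>i<m. dir_path E ends D s t (P i)) \<and>
        (\<forall>i<m. \<forall>j<m. i \<noteq> j \<longrightarrow> set (P i) \<inter> set (P j) = {}))"

end

theory Submission
  imports Defs
begin


definition dl :: "'a set \<Rightarrow> ('a \<Rightarrow> nat) \<Rightarrow> nat list" where
  "dl V a = rev (sorted_list_of_multiset (image_mset a (mset_set V)))"

lemma indeg_desc_dl: "indeg_desc V E ends D = dl V (indeg E ends D)"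
  by (simp add: indeg_desc_def dl_def)

lemma rank_desc:
  fixes xs :: "nat list"
  assumes "sorted_wrt (\<ge>) xs" "j < length xs"
  shows "(c \<le> xs!j) \<longleftrightarrow> j < length (filter (\<lambda>x. c \<le> x) xs)"
  using assms
proof (induction xs arbitrary: j)
  case Nil then show ?case by simp
next
  case (Cons x xs)
  show ?case
  proof (cases "c \<le> x")
    case True
    then show ?thesis using Cons by (cases j) auto
  next
    case False
    then have "filter (\<lambda>x. c \<le> x) xs = []" using Cons.prems(1)
      by (auto simp: filter_empty_conv)
    moreover have "\<not> c \<le> (x#xs)!j"
    proof (cases j)
      case 0 then show ?thesis using False by simp
    next
      case (Suc j') then have "j' < length xs" using Cons.prems by simp
      then have "xs!j' \<le> x" using Cons.prems(1) by auto
      then show ?thesis using False Suc by simp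
    qed
    ultimately show ?thesis using False by simp
  qed
qed

lemma dl_sorted: "sorted_wrt (\<ge>) (dl V a)"
  unfolding dl_def by (simp add: sorted_wrt_rev)

lemma dl_length: "finite V \<Longrightarrow> length (dl V a) = card V"
  unfolding dl_def by (metis length_rev mset_sorted_list_of_multiset size_image_mset size_mset size_mset_set)

lemma dl_count: "finite V \<Longrightarrow> length (filter P (dl V a)) = card {v\<in>V. P (a v)}"
proof -
  assume fin: "finite V"
  have "length (filter P (dl V a)) = size (filter_mset P (mset (dl V a)))" by (metis mset_filter size_mset)
  also have "mset (dl V a) = image_mset a (mset_set V)" by (simp add: dl_def)
  also have "size (filter_mset P (image_mset a (mset_set V))) = card {v\<in>V. P (a v)}"
    using fin by (simp add: filter_mset_image_mset)
  finally show ?thesis .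
qed

lemma dl_rank: "finite V \<Longrightarrow> j < card V \<Longrightarrow> (c \<le> dl V a ! j) \<longleftrightarrow> j < card {v\<in>V. c \<le> a v}"
  using rank_desc[OF dl_sorted, of j V a c] dl_length[of V a] dl_count[of V "\<lambda>x. c \<le> x" a] by simp

lemma lex_fwd:
  assumes fin: "finite V"
    and eq: "\<forall>c>\<beta>. card {v\<in>V. c \<le> b v} = card {v\<in>V. c \<le> a v}"
    and lt: "card {v\<in>V. \<beta> \<le> b v} < card {v\<in>V. \<beta> \<le> a v}"
  shows "lex_less (dl V b) (dl V a)"
proof -
  define i where "i = card {v\<in>V. \<beta> \<le> b v}"
  have cV: "card {v\<in>V. \<beta> \<le> a v} \<le> card V" by (rule card_mono[OF fin]) auto
  have iV: "i < card V" using lt cV i_def by linarith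
  have 1: "dl V b ! i < \<beta>" using dl_rank[OF fin iV, of \<beta> b] i_def by simp
  have 2: "\<beta> \<le> dl V a ! i" using dl_rank[OF fin iV, of \<beta> a] i_def lt by simp
  have 3: "dl V b ! j = dl V a ! j" if j: "j < i" for j
  proof -
    have jV: "j < card V" using j iV by simp
    define w where "w = dl V b ! j"
    have wb: "\<beta> \<le> w" using dl_rank[OF fin jV, of \<beta> b] j i_def w_def by simp
    have "\<not> j < card {v\<in>V. Suc w \<le> b v}" using dl_rank[OF fin jV, of "Suc w" b] w_def by simp
    then have "\<not> j < card {v\<in>V. Suc w \<le> a v}" using eq wb by simp
    then have A: "dl V a ! j \<le> w" using dl_rank[OF fin jV, of "Suc w" a] by simp
    have "j < card {v\<in>V. w \<le> a v}"
    proof (cases "w = \<beta>")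
      case True then show ?thesis using j i_def lt by simp
    next
      case False
      then have "\<beta> < w" using wb by simp
      then have "card {v\<in>V. w \<le> b v} = card {v\<in>V. w \<le> a v}" using eq by simp
      moreover have "j < card {v\<in>V. w \<le> b v}" using dl_rank[OF fin jV, of w b] w_def by simp
      ultimately show ?thesis by simp
    qed
    then have "w \<le> dl V a ! j" using dl_rank[OF fin jV, of w a] by simp
    then show ?thesis using A w_def by simp
  qed
  have "take i (dl V b) = take i (dl V a)"
    by (rule nth_equalityI) (use 3 iV dl_length[OF fin] in auto)
  then show ?thesis unfolding lex_less_def using 1 2 iV dl_length[OF fin, of b]
    by (intro exI[of _ i]) auto
qed

lemma lex_bwd:
  assumes fin: "finite V" and lx: "lex_less (dl V b) (dl V a)"
  shows "\<exists>\<beta>. (\<forall>c>\<beta>. card {v\<in>V. c \<le> b v} \<le> card {v\<in>V. c \<le> a v})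
           \<and> card {v\<in>V. \<beta> \<le> b v} < card {v\<in>V. \<beta> \<le> a v}"
proof -
  obtain i where i: "i < length (dl V b)" "take i (dl V b) = take i (dl V a)" "dl V b ! i < dl V a ! i"
    using lx unfolding lex_less_def by blast
  have iV: "i < card V" using i(1) dl_length[OF fin] by simp
  define \<beta> where "\<beta> = dl V a ! i"
  have eqj: "dl V b ! j = dl V a ! j" if "j < i" for j
    by (metis i(2) nth_take that)
  have A: "i < card {v\<in>V. \<beta> \<le> a v}" using dl_rank[OF fin iV, of \<beta> a] \<beta>_def by simp
  have B: "\<not> i < card {v\<in>V. \<beta> \<le> b v}" using dl_rank[OF fin iV, of \<beta> b] \<beta>_def i(3) by simp
  have C: "card {v\<in>V. c \<le> b v} \<le> card {v\<in>V. c \<le> a v}" if c: "c > \<beta>" for c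
  proof (cases "card {v\<in>V. c \<le> b v}")
    case 0 then show ?thesis by simp
  next
    case (Suc n)
    have "card {v\<in>V. c \<le> b v} \<le> card {v\<in>V. \<beta> \<le> b v}"
      by (rule card_mono) (use fin c in auto)
    then have ni: "n < i" using B Suc by simp
    then have nV: "n < card V" using iV by simp
    have "c \<le> dl V b ! n" using dl_rank[OF fin nV, of c b] Suc by simp
    then have "c \<le> dl V a ! n" using eqj[OF ni] by simp
    then have "n < card {v\<in>V. c \<le> a v}" using dl_rank[OF fin nV, of c a] by simp
    then show ?thesis using Suc by simp
  qed
  show ?thesis using A B C by (intro exI[of _ \<beta>]) auto
qed

lemma level_sum:
  fixes x :: "'a \<Rightarrow> nat"
  assumes fin: "finite W" and bd: "\<forall>v\<in>W. x v \<le> K"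
  shows "(\<Sum>v\<in>W. x v) = (\<Sum>c\<in>{1..K}. card {v\<in>W. c \<le> x v})"
proof -
  have "x v = (\<Sum>c\<in>{1..K}. of_bool (c \<le> x v))" if "v \<in> W" for v
  proof -
    have "{1..K} \<inter> {c. c \<le> x v} = {1..x v}" using bd that by auto
    then show ?thesis by simp
  qed
  then have "(\<Sum>v\<in>W. x v) = (\<Sum>v\<in>W. \<Sum>c\<in>{1..K}. of_bool (c \<le> x v))"
    by (rule sum.cong[OF refl])
  also have "\<dots> = (\<Sum>c\<in>{1..K}. \<Sum>v\<in>W. of_bool (c \<le> x v))" by (rule sum.swap)
  also have "\<dots> = (\<Sum>c\<in>{1..K}. card {v\<in>W. c \<le> x v})"
    using fin by (intro sum.cong[OF refl]) (simp add: Int_def conj_commute)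
  finally show ?thesis .
qed

lemma count_main:
  fixes a b :: "'a \<Rightarrow> nat"
  assumes fin: "finite V" and ZV: "Z \<subseteq> V"
    and lev: "\<forall>c>\<beta>. card {v\<in>V. c \<le> b v} \<le> card {v\<in>V. c \<le> a v}"
    and ltb: "card {v\<in>V. \<beta> \<le> b v} < card {v\<in>V. \<beta> \<le> a v}"
    and hZ1: "\<forall>v\<in>Z. a v + 2 \<le> \<beta> \<longrightarrow> b v \<le> a v"
    and hZ2: "\<forall>v\<in>V - Z. \<beta> \<le> a v \<longrightarrow> a v \<le> b v"
  shows "(\<Sum>v\<in>Z. int (b v)) < (\<Sum>v\<in>Z. int (a v))"
proof -
  define W where "W = {v\<in>V. \<beta> \<le> a v} \<union> {v\<in>Z. a v + 1 = \<beta>}"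
  have finW: "finite W" using fin ZV unfolding W_def by (auto intro: finite_subset)
  have WV: "W \<subseteq> V" using ZV W_def by auto
  define K where "K = \<beta> + (\<Sum>v\<in>V. a v + b v)"
  have aK: "a v \<le> K" "b v \<le> K" if "v \<in> V" for v
  proof -
    have "a v + b v \<le> (\<Sum>v\<in>V. a v + b v)" by (rule member_le_sum) (use that fin in auto)
    then show "a v \<le> K" "b v \<le> K" unfolding K_def by auto
  qed
  have b1: "\<beta> \<ge> 1"
  proof (rule ccontr)
    assume "\<not> \<beta> \<ge> 1"
    then have "\<beta> = 0" by simp
    then have "card {v\<in>V. \<beta> \<le> a v} \<le> card {v\<in>V. \<beta> \<le> b v}" by simp
    then show False using ltb by simp
  qed
  have lvl: "card {v\<in>W. c \<le> b v} \<le> card {v\<in>W. c \<le> a v}" for c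
  proof (cases "c \<ge> \<beta>")
    case True
    have e: "{v\<in>W. c \<le> a v} = {v\<in>V. c \<le> a v}" using True WV unfolding W_def by auto
    have "card {v\<in>W. c \<le> b v} \<le> card {v\<in>V. c \<le> b v}"
      by (rule card_mono) (use fin WV in auto)
    also have "\<dots> \<le> card {v\<in>V. c \<le> a v}"
      using lev ltb True by (cases "c = \<beta>") auto
    finally show ?thesis using e by simp
  next
    case False
    have e: "{v\<in>W. c \<le> a v} = W" using False unfolding W_def by auto
    have "card {v\<in>W. c \<le> b v} \<le> card W" by (rule card_mono) (use finW in auto)
    then show ?thesis using e by simp
  qed
  have lvlb: "card {v\<in>W. \<beta> \<le> b v} < card {v\<in>W. \<beta> \<le> a v}"
  proof -
    have e: "{v\<in>W. \<beta> \<le> a v} = {v\<in>V. \<beta> \<le> a v}" using WV unfolding W_def by auto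
    have "card {v\<in>W. \<beta> \<le> b v} \<le> card {v\<in>V. \<beta> \<le> b v}"
      by (rule card_mono) (use fin WV in auto)
    then show ?thesis using e ltb by simp
  qed
  have sW: "(\<Sum>v\<in>W. b v) < (\<Sum>v\<in>W. a v)"
  proof -
    have "(\<Sum>v\<in>W. b v) = (\<Sum>c\<in>{1..K}. card {v\<in>W. c \<le> b v})"
      by (rule level_sum[OF finW]) (use aK WV in auto)
    also have "\<dots> < (\<Sum>c\<in>{1..K}. card {v\<in>W. c \<le> a v})"
      by (rule sum_strict_mono_ex1) (use lvl lvlb b1 K_def in auto)
    also have "\<dots> = (\<Sum>v\<in>W. a v)"
      by (rule level_sum[OF finW, symmetric]) (use aK WV in auto)
    finally show ?thesis .
  qed
  define h where "h v = int (a v) - int (b v)" for v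
  have finZ: "finite Z" using fin ZV finite_subset by auto
  have sWh: "(\<Sum>v\<in>W. h v) > 0"
  proof -
    have "(\<Sum>v\<in>W. int (b v)) < (\<Sum>v\<in>W. int (a v))" using sW by (simp flip: of_nat_sum)
    then show ?thesis unfolding h_def by (simp add: sum_subtractf)
  qed
  have "(\<Sum>v\<in>W. h v) = (\<Sum>v\<in>W \<inter> Z. h v) + (\<Sum>v\<in>W - Z. h v)"
    using finW by (rule sum.Int_Diff)
  moreover have "(\<Sum>v\<in>W - Z. h v) \<le> 0"
    by (rule sum_nonpos) (use hZ2 WV h_def W_def in auto)
  ultimately have p1: "(\<Sum>v\<in>W \<inter> Z. h v) > 0" using sWh by linarith
  have "(\<Sum>v\<in>Z. h v) = (\<Sum>v\<in>W \<inter> Z. h v) + (\<Sum>v\<in>Z - W. h v)"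
    using sum.Int_Diff[OF finZ, of h W] by (simp add: Int_commute)
  moreover have "(\<Sum>v\<in>Z - W. h v) \<ge> 0"
  proof (rule sum_nonneg)
    fix v assume v: "v \<in> Z - W"
    then have "a v + 2 \<le> \<beta>" using ZV unfolding W_def by auto
    then show "0 \<le> h v" using hZ1 v h_def by auto
  qed
  ultimately have "(\<Sum>v\<in>Z. h v) > 0" using p1 by linarith
  then show ?thesis unfolding h_def by (simp add: sum_subtractf)
qed



definition flip :: "('e \<Rightarrow> bool) \<Rightarrow> 'e set \<Rightarrow> 'e \<Rightarrow> bool" where
  "flip D A = (\<lambda>e. if e \<in> A then \<not> D e else D e)"

definition cutin :: "'e set \<Rightarrow> ('e \<Rightarrow> 'a \<times> 'a) \<Rightarrow> ('e \<Rightarrow> bool) \<Rightarrow> 'a set \<Rightarrow> nat" where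
  "cutin E ends D X = card {e\<in>E. head ends D e \<in> X \<and> tail ends D e \<notin> X}"

definition inside :: "'e set \<Rightarrow> ('e \<Rightarrow> 'a \<times> 'a) \<Rightarrow> 'a set \<Rightarrow> nat" where
  "inside E ends X = card {e\<in>E. fst (ends e) \<in> X \<and> snd (ends e) \<in> X}"

lemma head_cong: "D e = D' e \<Longrightarrow> head ends D e = head ends D' e"
  by (simp add: head_def)
lemma tail_cong: "D e = D' e \<Longrightarrow> tail ends D e = tail ends D' e"
  by (simp add: tail_def)

lemma cut_inside:
  assumes "finite E" "finite X"
  shows "cutin E ends D X + inside E ends X = (\<Sum>v\<in>X. indeg E ends D v)"
proof -
  have "(\<Sum>v\<in>X. indeg E ends D v) = card (\<Union>v\<in>X. {e\<in>E. head ends D e = v})"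
    unfolding indeg_def by (rule card_UN_disjoint[symmetric]) (use assms in auto)
  also have "(\<Union>v\<in>X. {e\<in>E. head ends D e = v}) =
      {e\<in>E. head ends D e \<in> X \<and> tail ends D e \<notin> X} \<union> {e\<in>E. fst (ends e) \<in> X \<and> snd (ends e) \<in> X}"
    by (auto simp: head_def tail_def split: if_splits)
  also have "card \<dots> = cutin E ends D X + inside E ends X"
    unfolding cutin_def inside_def
    by (rule card_Un_disjoint) (use assms in \<open>auto simp: head_def tail_def split: if_splits\<close>)
  finally show ?thesis by simp
qed

lemma card_split1: "finite S \<Longrightarrow> int (card S) = int (card (S - {e})) + of_bool (e \<in> S)"
proof (cases "e \<in> S")
  case True
  assume f: "finite S"
  have "card S = Suc (card (S - {e}))" by (rule card.remove[OF f True])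
  then show ?thesis using True by simp
next
  case False then show ?thesis by simp
qed

lemma flip_one:
  assumes fin: "finite E"
  shows "int (indeg E ends (flip D0 {e}) v) = int (indeg E ends D0 v)
     - of_bool (e \<in> E \<and> v = head ends D0 e) + of_bool (e \<in> E \<and> v = tail ends D0 e)"
proof -
  let ?S0 = "{e'\<in>E. head ends D0 e' = v}"
  let ?S1 = "{e'\<in>E. head ends (flip D0 {e}) e' = v}"
  have eq: "?S1 - {e} = ?S0 - {e}" by (auto simp: flip_def head_def)
  have h1: "head ends (flip D0 {e}) e = tail ends D0 e" by (simp add: flip_def head_def tail_def)
  have c1: "int (card ?S1) = int (card (?S1 - {e})) + of_bool (e \<in> ?S1)"
    using fin by (intro card_split1) simp
  have c0: "int (card ?S0) = int (card (?S0 - {e})) + of_bool (e \<in> ?S0)"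
    using fin by (intro card_split1) simp
  have i0: "(e \<in> ?S0) = (e \<in> E \<and> v = head ends D0 e)" by auto
  have i1: "(e \<in> ?S1) = (e \<in> E \<and> v = tail ends D0 e)" using h1 by auto
  have "int (card ?S1) = int (card ?S0) - of_bool (e \<in> ?S0) + of_bool (e \<in> ?S1)"
    using c1 c0 eq by simp
  then show ?thesis unfolding indeg_def i0 i1 .
qed

lemma dp_Cons:
  assumes "dir_path A ends D s t (e # p)"
  shows "e \<in> A \<and> tail ends D e = s \<and> dir_path A ends D (head ends D e) t p
     \<and> s \<noteq> head ends D e \<and> e \<notin> set p"
proof -
  have d: "distinct (s # head ends D e # map (head ends D) p)" using assms unfolding dir_path_def by simp
  have lk: "\<forall>i. Suc i < length (e#p) \<longrightarrow> head ends D ((e#p) ! i) = tail ends D ((e#p) ! Suc i)"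
    using assms unfolding dir_path_def by blast
  have "e \<notin> set p" using d by auto
  moreover have "dir_path A ends D (head ends D e) t p"
    unfolding dir_path_def
  proof (intro conjI impI allI)
    show "set p \<subseteq> A" using assms unfolding dir_path_def by simp
    show "head ends D e = t" if "p = []" using assms that unfolding dir_path_def by simp
    show "tail ends D (hd p) = head ends D e" if "p \<noteq> []"
      using lk[rule_format, of 0] that by (cases p) auto
    show "head ends D (last p) = t" if "p \<noteq> []" using assms that unfolding dir_path_def by simp
    show "head ends D (p ! i) = tail ends D (p ! Suc i)" if "Suc i < length p" for i
      using lk[rule_format, of "Suc i"] that by simp
    show "distinct (head ends D e # map (head ends D) p)" using d by simp
  qed
  ultimately show ?thesis using assms d unfolding dir_path_def by auto
qed

lemma dp_cong:
  assumes "\<forall>e\<in>set p. D e = D' e"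
  shows "dir_path A ends D s t p = dir_path A ends D' s t p"
proof -
  have m: "map (head ends D) p = map (head ends D') p"
    using assms by (auto intro: head_cong)
  have n: "\<And>i. i < length p \<Longrightarrow> head ends D (p!i) = head ends D' (p!i) \<and> tail ends D (p!i) = tail ends D' (p!i)"
    using assms by (auto intro: head_cong tail_cong)
  have hl: "p \<noteq> [] \<Longrightarrow> head ends D (last p) = head ends D' (last p) \<and> tail ends D (hd p) = tail ends D' (hd p)"
    using assms by (auto intro: head_cong tail_cong)
  have lk: "(\<forall>i. Suc i < length p \<longrightarrow> head ends D (p ! i) = tail ends D (p ! Suc i)) =
            (\<forall>i. Suc i < length p \<longrightarrow> head ends D' (p ! i) = tail ends D' (p ! Suc i))"
  proof -
    have "\<And>i. Suc i < length p \<Longrightarrow> (head ends D (p ! i) = tail ends D (p ! Suc i)) =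
            (head ends D' (p ! i) = tail ends D' (p ! Suc i))"
      using n by (metis Suc_lessD lessI less_trans)
    then show ?thesis by blast
  qed
  have en: "(p \<noteq> [] \<longrightarrow> tail ends D (hd p) = s \<and> head ends D (last p) = t) =
            (p \<noteq> [] \<longrightarrow> tail ends D' (hd p) = s \<and> head ends D' (last p) = t)"
    using hl by auto
  show ?thesis unfolding dir_path_def m lk en ..
qed

lemma flip_path:
  assumes fin: "finite E" and AE: "A \<subseteq> E"
  shows "dir_path A ends D a b p \<Longrightarrow> int (indeg E ends (flip D (set p)) v)
       = int (indeg E ends D v) + of_bool (v = a) - of_bool (v = b)"
proof (induction p arbitrary: a)
  case Nil
  then have "a = b" unfolding dir_path_def by simp
  moreover have "flip D (set []) = D" by (simp add: flip_def)
  ultimately show ?case by simp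
next
  case (Cons e p)
  note c = dp_Cons[OF Cons.prems]
  define D0 where "D0 = flip D (set p)"
  have fe: "flip D (set (e#p)) = flip D0 {e}" using c unfolding D0_def flip_def by auto
  have hd0: "head ends D0 e = head ends D e" "tail ends D0 e = tail ends D e"
    using c by (auto simp: D0_def flip_def intro: head_cong tail_cong)
  have eE: "e \<in> E" using c AE by auto
  have IH: "int (indeg E ends D0 v) = int (indeg E ends D v) + of_bool (v = head ends D e) - of_bool (v = b)"
    using Cons.IH c unfolding D0_def by blast
  have F: "int (indeg E ends (flip D0 {e}) v) = int (indeg E ends D0 v)
     - of_bool (e \<in> E \<and> v = head ends D0 e) + of_bool (e \<in> E \<and> v = tail ends D0 e)"
    by (rule flip_one[OF fin])
  show ?case unfolding fe F IH hd0 using eE c by simp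
qed



lemma dp_nil: "dir_path A ends D s s []"
  unfolding dir_path_def by simp

lemma dp_prefix:
  assumes dp: "dir_path A ends D s t p" and i: "i < length p"
  shows "dir_path A ends D s (head ends D (p!i)) (take (Suc i) p)"
proof -
  have ne: "take (Suc i) p \<noteq> []" using i by (cases p) auto
  have hd: "hd (take (Suc i) p) = hd p" using i by (cases p) auto
  have lst: "last (take (Suc i) p) = p ! i" using i ne by (simp add: last_conv_nth min_def, intro impI arg_cong[where f="(!) p"], simp)
  have ds: "s # map (head ends D) (take (Suc i) p) = take (Suc (Suc i)) (s # map (head ends D) p)"
    by (simp add: take_map)
  have "set (take (Suc i) p) \<subseteq> A" using dp set_take_subset unfolding dir_path_def by fast
  moreover have "tail ends D (hd (take (Suc i) p)) = s" using dp ne hd i unfolding dir_path_def by auto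
  moreover have "\<forall>j. Suc j < length (take (Suc i) p) \<longrightarrow>
     head ends D (take (Suc i) p ! j) = tail ends D (take (Suc i) p ! Suc j)"
    using dp unfolding dir_path_def by auto
  moreover have "distinct (s # map (head ends D) (take (Suc i) p))"
    unfolding ds using dp unfolding dir_path_def by (simp add: distinct_take del: take_Suc_Cons)
  ultimately show ?thesis unfolding dir_path_def using ne lst by simp
qed

lemma dp_snoc:
  assumes dp: "dir_path A ends D s v p" and e: "e \<in> A" "tail ends D e = v"
    and nh: "head ends D e \<notin> set (s # map (head ends D) p)"
  shows "dir_path A ends D s (head ends D e) (p @ [e])"
proof (cases "p = []")
  case True
  then have "s = v" using dp unfolding dir_path_def by simp
  then show ?thesis using True e nh unfolding dir_path_def by auto
next
  case False
  have lk: "head ends D ((p @ [e]) ! j) = tail ends D ((p @ [e]) ! Suc j)" if j: "Suc j < length (p @ [e])" for j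
  proof (cases "Suc j < length p")
    case True
    then show ?thesis using dp unfolding dir_path_def by (simp add: nth_append)
  next
    case False
    then have "Suc j = length p" using j by simp
    then have "p ! j = last p" using \<open>p \<noteq> []\<close> by (metis diff_Suc_1 last_conv_nth)
    then show ?thesis using dp \<open>Suc j = length p\<close> e \<open>p \<noteq> []\<close> unfolding dir_path_def
      by (simp add: nth_append)
  qed
  show ?thesis unfolding dir_path_def using dp False e nh lk unfolding dir_path_def by auto
qed

definition reach :: "'e set \<Rightarrow> ('e \<Rightarrow> 'a \<times> 'a) \<Rightarrow> ('e \<Rightarrow> bool) \<Rightarrow> 'a \<Rightarrow> 'a set" where
  "reach A ends D s = {v. \<exists>p. dir_path A ends D s v p}"

lemma reach_self: "s \<in> reach A ends D s"
  unfolding reach_def using dp_nil by fast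

lemma reach_closed:
  assumes v: "v \<in> reach A ends D s" and e: "e \<in> A" "tail ends D e = v"
  shows "head ends D e \<in> reach A ends D s"
proof -
  obtain p where p: "dir_path A ends D s v p" using v unfolding reach_def by blast
  show ?thesis
  proof (cases "head ends D e \<in> set (s # map (head ends D) p)")
    case True
    then consider "head ends D e = s" | i where "i < length p" "head ends D e = head ends D (p ! i)"
      by (auto simp: in_set_conv_nth)
    then show ?thesis
    proof cases
      case 1 then show ?thesis using reach_self by metis
    next
      case 2 then show ?thesis using dp_prefix[OF p 2(1)] unfolding reach_def by auto
    qed
  next
    case False
    then show ?thesis using dp_snoc[OF p e False] unfolding reach_def by blast
  qed
qed

lemma reach_sub:
  assumes "\<forall>e\<in>A. snd (ends e) \<in> V \<and> fst (ends e) \<in> V" "s \<in> V"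
  shows "reach A ends D s \<subseteq> V"
proof
  fix v assume "v \<in> reach A ends D s"
  then obtain p where p: "dir_path A ends D s v p" unfolding reach_def by blast
  show "v \<in> V"
  proof (cases "p = []")
    case True then show ?thesis using p assms unfolding dir_path_def by simp
  next
    case False
    then have "last p \<in> A" "head ends D (last p) = v" using p unfolding dir_path_def by auto
    then show ?thesis using assms by (auto simp: head_def split: if_splits)
  qed
qed



lemma sum_shift:
  fixes f :: "'a \<Rightarrow> int"
  assumes "finite X"
  shows "(\<Sum>v\<in>X. f v + (if v = a then c else 0) - (if v = b then c else 0))
       = (\<Sum>v\<in>X. f v) + (if a \<in> X then c else 0) - (if b \<in> X then c else 0)"
  using assms by (simp add: sum.distrib sum_subtractf sum.delta')

lemma dp_mono: "A \<subseteq> B \<Longrightarrow> dir_path A ends D s t p \<Longrightarrow> dir_path B ends D s t p"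
  unfolding dir_path_def by blast

lemma cut_sum_int:
  assumes "finite E" "finite X"
  shows "int (cutin E ends D X) + int (inside E ends X) = (\<Sum>v\<in>X. int (indeg E ends D v))"
  using cut_inside[OF assms, of ends D] by (simp flip: of_nat_sum)

locale menger_setup =
  fixes V :: "'a set" and E :: "'e set" and ends :: "'e \<Rightarrow> 'a \<times> 'a" and s t :: 'a
  assumes finV: "finite V" and finE: "finite E"
    and endsV: "\<forall>e\<in>E. fst (ends e) \<in> V \<and> snd (ends e) \<in> V"
    and sV: "s \<in> V" and tV: "t \<in> V" and st: "s \<noteq> t"
begin

lemma endsV': "\<forall>e\<in>A. snd (ends e) \<in> V \<and> fst (ends e) \<in> V" if "A \<subseteq> E" for A
  using endsV that by auto

lemma tail_in: "e \<in> E \<Longrightarrow> tail ends D e \<in> V"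
  using endsV by (auto simp: tail_def)
lemma head_in: "e \<in> E \<Longrightarrow> head ends D e \<in> V"
  using endsV by (auto simp: head_def)

lemma flow_exists:
  "(\<forall>X. X \<subseteq> V \<and> t \<in> X \<and> s \<notin> X \<longrightarrow> j \<le> cutin E ends D X) \<Longrightarrow>
   \<exists>D2. (\<forall>e. e \<notin> E \<longrightarrow> D2 e = D e) \<and>
     (\<forall>v. int (indeg E ends D2 v) = int (indeg E ends D v) + (if v = s then int j else 0) - (if v = t then int j else 0))"
proof (induction j)
  case 0
  show ?case by (intro exI[of _ D]) simp
next
  case (Suc j)
  then obtain D1 where D1: "\<forall>e. e \<notin> E \<longrightarrow> D1 e = D e"
    "\<forall>v. int (indeg E ends D1 v) = int (indeg E ends D v) + (if v = s then int j else 0) - (if v = t then int j else 0)"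
    by (metis Suc_leD)
  define R where "R = reach E ends D1 s"
  show ?case
  proof (cases "t \<in> R")
    case True
    then obtain p where p: "dir_path E ends D1 s t p" unfolding R_def reach_def by blast
    have pE: "set p \<subseteq> E" using p unfolding dir_path_def by simp
    have F: "int (indeg E ends (flip D1 (set p)) v) = int (indeg E ends D1 v) + of_bool (v = s) - of_bool (v = t)" for v
      by (rule flip_path[OF finE order_refl p])
    show ?thesis
      apply (intro exI[of _ "flip D1 (set p)"] conjI allI impI)
      subgoal for e using D1(1) pE by (auto simp: flip_def)
      subgoal for v using F[of v] D1(2)[rule_format, of v] st by (cases "v = s"; cases "v = t") simp_all
      done
  next
    case False
    define X where "X = V - R"
    have XV: "X \<subseteq> V" and tX: "t \<in> X" and sX: "s \<notin> X"
      using False tV reach_self[of s E ends D1] unfolding X_def R_def by auto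
    have finX: "finite X" using finV XV finite_subset by auto
    have c0: "cutin E ends D1 X = 0"
    proof -
      have h: "{e\<in>E. head ends D1 e \<in> X \<and> tail ends D1 e \<notin> X} = {}"
      proof (rule ccontr)
        assume "{e\<in>E. head ends D1 e \<in> X \<and> tail ends D1 e \<notin> X} \<noteq> {}"
        then obtain e where e: "e \<in> E" "head ends D1 e \<in> X" "tail ends D1 e \<notin> X" by blast
        then have "tail ends D1 e \<in> R" using tail_in[OF e(1)] X_def by auto
        then have "head ends D1 e \<in> R" using reach_closed e(1) unfolding R_def by metis
        then show False using e(2) X_def by auto
      qed
      show ?thesis unfolding cutin_def h by simp
    qed
    have "(\<Sum>v\<in>X. int (indeg E ends D1 v)) = (\<Sum>v\<in>X. int (indeg E ends D v)) - int j"
      using D1(2) sum_shift[OF finX, of "\<lambda>v. int (indeg E ends D v)" s "int j" t] sX tX by simp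
    then have "int (cutin E ends D1 X) = int (cutin E ends D X) - int j"
      using cut_sum_int[OF finE finX, of ends D1] cut_sum_int[OF finE finX, of ends D] by linarith
    then have "cutin E ends D X = j" using c0 by linarith
    moreover have "Suc j \<le> cutin E ends D X" using Suc.prems XV tX sX by blast
    ultimately show ?thesis by simp
  qed
qed

lemma decomp:
  "(\<forall>e. e \<notin> E \<longrightarrow> D2 e = D e) \<Longrightarrow>
   (\<forall>v. int (indeg E ends D2 v) = int (indeg E ends D v) + (if v = s then int j else 0) - (if v = t then int j else 0)) \<Longrightarrow>
   \<exists>P. (\<forall>i<j. dir_path E ends D s t (P i) \<and> set (P i) \<subseteq> {e\<in>E. D2 e \<noteq> D e}) \<and>
       (\<forall>i<j. \<forall>i'<j. i \<noteq> i' \<longrightarrow> set (P i) \<inter> set (P i') = {})"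
proof (induction j arbitrary: D2)
  case 0
  show ?case by simp
next
  case (Suc j)
  define F where "F = {e\<in>E. D2 e \<noteq> D e}"
  have FE: "F \<subseteq> E" unfolding F_def by auto
  define R where "R = reach F ends D s"
  have RV: "R \<subseteq> V" unfolding R_def by (rule reach_sub[OF endsV'[OF FE] sV])
  have finR: "finite R" using finV RV finite_subset by auto
  have tR: "t \<in> R"
  proof (rule ccontr)
    assume tR: "t \<notin> R"
    have sR: "s \<in> R" unfolding R_def by (rule reach_self)
    have sub: "{e\<in>E. head ends D2 e \<in> R \<and> tail ends D2 e \<notin> R} \<subseteq> {e\<in>E. head ends D e \<in> R \<and> tail ends D e \<notin> R}"
    proof
      fix e assume e: "e \<in> {e\<in>E. head ends D2 e \<in> R \<and> tail ends D2 e \<notin> R}"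
      show "e \<in> {e\<in>E. head ends D e \<in> R \<and> tail ends D e \<notin> R}"
      proof (cases "D2 e = D e")
        case True then show ?thesis using e True by (auto simp: head_def tail_def)
      next
        case False
        then have h: "head ends D2 e = tail ends D e" "tail ends D2 e = head ends D e"
          by (auto simp: head_def tail_def)
        have "e \<in> F" using e False F_def by auto
        then have "head ends D e \<in> R" using reach_closed[of "tail ends D e" F ends D s e] e h
          unfolding R_def by auto
        then show ?thesis using e h by auto
      qed
    qed
    have "cutin E ends D2 R \<le> cutin E ends D R" unfolding cutin_def
      by (rule card_mono[OF _ sub]) (use finE in auto)
    moreover have "(\<Sum>v\<in>R. int (indeg E ends D2 v)) = (\<Sum>v\<in>R. int (indeg E ends D v)) + int (Suc j)"
      using Suc.prems(2) sum_shift[OF finR, of "\<lambda>v. int (indeg E ends D v)" s "int (Suc j)" t] sR tR by simp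
    ultimately show False
      using cut_sum_int[OF finE finR, of ends D2] cut_sum_int[OF finE finR, of ends D] by linarith
  qed
  then obtain p where pF: "dir_path F ends D s t p" unfolding R_def reach_def by blast
  have pE: "dir_path E ends D s t p" by (rule dp_mono[OF FE pF])
  have spF: "set p \<subseteq> F" using pF unfolding dir_path_def by simp
  define D3 where "D3 = flip D2 (set p)"
  have D3p: "\<forall>e\<in>set p. D3 e = D e" using spF unfolding D3_def F_def flip_def by auto
  have p3: "dir_path E ends D3 s t p" using pE dp_cong[of p D3 D] D3p by metis
  have D2f: "D2 = flip D3 (set p)" unfolding D3_def flip_def by auto
  have fl: "int (indeg E ends D2 v) = int (indeg E ends D3 v) + of_bool (v = s) - of_bool (v = t)" for v
    unfolding D2f by (rule flip_path[OF finE order_refl p3])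
  have out3: "\<forall>e. e \<notin> E \<longrightarrow> D3 e = D e" using Suc.prems(1) spF FE unfolding D3_def flip_def by auto
  have in3: "\<forall>v. int (indeg E ends D3 v) = int (indeg E ends D v) + (if v = s then int j else 0) - (if v = t then int j else 0)"
  proof
    fix v show "int (indeg E ends D3 v) = int (indeg E ends D v) + (if v = s then int j else 0) - (if v = t then int j else 0)"
      using fl[of v] Suc.prems(2)[rule_format, of v] st by (cases "v = s"; cases "v = t") simp_all
  qed
  obtain P where P: "\<forall>i<j. dir_path E ends D s t (P i) \<and> set (P i) \<subseteq> {e\<in>E. D3 e \<noteq> D e}"
    "\<forall>i<j. \<forall>i'<j. i \<noteq> i' \<longrightarrow> set (P i) \<inter> set (P i') = {}"
    using Suc.IH[OF out3 in3] by blast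
  have F3: "{e\<in>E. D3 e \<noteq> D e} \<subseteq> F - set p" using D3p unfolding D3_def F_def flip_def by auto
  define P' where "P' = P(j := p)"
  show ?case
  proof (intro exI[of _ P'] conjI allI impI)
    fix i assume i: "i < Suc j"
    show "dir_path E ends D s t (P' i)" using P(1) pE i unfolding P'_def by (cases "i = j") auto
    show "set (P' i) \<subseteq> {e\<in>E. D2 e \<noteq> D e}"
    proof (cases "i = j")
      case True then show ?thesis using spF unfolding P'_def F_def by simp
    next
      case False
      then have "i < j" using i by simp
      then have "set (P i) \<subseteq> F" using P(1) F3 by blast
      then show ?thesis using False unfolding P'_def F_def by simp
    qed
  next
    fix i i' assume i: "i < Suc j" "i' < Suc j" "i \<noteq> i'"
    show "set (P' i) \<inter> set (P' i') = {}"
    proof (cases "i = j")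
      case True
      then have "i' < j" using i by simp
      then have "set (P i') \<subseteq> F - set p" using P(1) F3 by blast
      then show ?thesis using True i unfolding P'_def by auto
    next
      case False
      then have ij: "i < j" using i by simp
      show ?thesis
      proof (cases "i' = j")
        case True
        have "set (P i) \<subseteq> F - set p" using P(1) F3 ij by blast
        then show ?thesis using True i unfolding P'_def by auto
      next
        case False
        then have "i' < j" using i by simp
        then show ?thesis using P(2) ij i(3) False \<open>i \<noteq> j\<close> unfolding P'_def by simp
      qed
    qed
  qed
qed

lemma menger:
  assumes "\<forall>X. X \<subseteq> V \<and> t \<in> X \<and> s \<notin> X \<longrightarrow> j \<le> cutin E ends D X"
  shows "arc_disjoint_paths j E ends D s t"
proof -
  obtain D2 where "\<forall>e. e \<notin> E \<longrightarrow> D2 e = D e"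
     "\<forall>v. int (indeg E ends D2 v) = int (indeg E ends D v) + (if v = s then int j else 0) - (if v = t then int j else 0)"
    using flow_exists[OF assms] by blast
  from decomp[OF this] show ?thesis unfolding arc_disjoint_paths_def by blast
qed

end



locale sep_setup =
  fixes V :: "'a set" and tight :: "'a set \<Rightarrow> bool" and h :: "'a \<Rightarrow> int"
  assumes finV: "finite V"
    and tightV: "\<And>X. tight X \<Longrightarrow> X \<subseteq> V"
    and cross: "\<And>X Y. tight X \<Longrightarrow> tight Y \<Longrightarrow> X \<inter> Y \<noteq> {} \<Longrightarrow> X \<union> Y \<noteq> V \<Longrightarrow> tight (X \<inter> Y) \<and> tight (X \<union> Y)"
    and neg: "\<And>X. tight X \<Longrightarrow> sum h X \<le> 0"
    and hV: "sum h V = 0"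
begin

lemma G1:
  "finite \<X> \<Longrightarrow> \<X> \<noteq> {} \<Longrightarrow> \<forall>X\<in>\<X>. tight X \<Longrightarrow> u \<in> \<Inter>\<X> \<Longrightarrow> sum h (\<Inter>\<X>) \<le> 0"
proof (induction "card \<X>" arbitrary: \<X> rule: less_induct)
  case less
  show ?case
  proof (cases "\<exists>X\<in>\<X>. \<exists>Y\<in>\<X>. X \<noteq> Y \<and> X \<union> Y \<noteq> V")
    case True
    then obtain X Y where XY: "X \<in> \<X>" "Y \<in> \<X>" "X \<noteq> Y" "X \<union> Y \<noteq> V" by blast
    define \<X>' where "\<X>' = insert (X \<inter> Y) (\<X> - {X, Y})"
    have c2: "card (\<X> - {X, Y}) = card \<X> - 2" using XY less.prems(1) by (simp add: card_Diff_subset)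
    have "card \<X> \<ge> 2"
    proof -
      have "{X, Y} \<subseteq> \<X>" using XY by auto
      then have "card {X, Y} \<le> card \<X>" using less.prems(1) by (rule card_mono[rotated])
      then show ?thesis using XY(3) by simp
    qed
    moreover have "card \<X>' \<le> Suc (card (\<X> - {X, Y}))" unfolding \<X>'_def using less.prems(1)
      by (simp add: card_insert_if)
    ultimately have lt: "card \<X>' < card \<X>" using c2 by linarith
    have uXY: "u \<in> X \<inter> Y" using less.prems(4) XY by auto
    have tXY: "tight (X \<inter> Y)" using cross[of X Y] less.prems(3) XY uXY by blast
    have eq: "\<Inter>\<X>' = \<Inter>\<X>" unfolding \<X>'_def using XY by auto
    have "sum h (\<Inter>\<X>') \<le> 0"
      by (rule less.hyps[OF lt]) (use less.prems tXY eq in \<open>auto simp: \<X>'_def\<close>)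
    then show ?thesis using eq by simp
  next
    case False
    have sub: "\<Inter>\<X> \<subseteq> V" using less.prems(2,3) tightV by blast
    have A: "sum h V = sum h (\<Inter>\<X>) + sum h (V - \<Inter>\<X>)"
      using sum.subset_diff[OF sub finV, of h] by linarith
    have B: "V - \<Inter>\<X> = (\<Union>X\<in>\<X>. V - X)" by auto
    have C: "sum h (\<Union>X\<in>\<X>. V - X) = (\<Sum>X\<in>\<X>. sum h (V - X))"
      by (rule sum.UNION_disjoint) (use less.prems(1) finV False in auto)
    have D: "sum h (V - X) = - sum h X" if "X \<in> \<X>" for X
      using sum.subset_diff[OF tightV finV, of X h] less.prems(3) that hV by simp
    have "(\<Sum>X\<in>\<X>. sum h (V - X)) \<ge> 0"
      by (rule sum_nonneg) (use D neg less.prems(3) in fastforce)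
    then show ?thesis using A C hV unfolding B by linarith
  qed
qed

definition core :: "'a set \<Rightarrow> ('a \<Rightarrow> 'a set) \<Rightarrow> 'a set" where
  "core S B = \<Inter> (B ` S)"

definition good :: "'a set \<Rightarrow> ('a \<Rightarrow> 'a set) \<Rightarrow> bool" where
  "good S B \<longleftrightarrow> (\<forall>s\<in>S. tight (B s) \<and> s \<notin> B s) \<and> core S B \<noteq> {}"

lemma blocks:
  assumes SV: "S \<subseteq> V" and Sne: "S \<noteq> {}"
  shows "finite \<B> \<Longrightarrow> \<forall>B\<in>\<B>. good S B \<Longrightarrow>
     \<exists>Z\<subseteq>V. \<Union>(core S ` \<B>) \<subseteq> Z \<and> Z \<inter> S = {} \<and> sum h Z \<le> 0"
proof (induction "card \<B>" arbitrary: \<B> rule: less_induct)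
  case less
  show ?case
  proof (cases "\<exists>B1\<in>\<B>. \<exists>B2\<in>\<B>. B1 \<noteq> B2 \<and> core S B1 \<inter> core S B2 \<noteq> {}")
    case True
    then obtain B1 B2 where B: "B1 \<in> \<B>" "B2 \<in> \<B>" "B1 \<noteq> B2" "core S B1 \<inter> core S B2 \<noteq> {}" by blast
    define M where "M = (\<lambda>s. B1 s \<union> B2 s)"
    define \<B>' where "\<B>' = insert M (\<B> - {B1, B2})"
    have c2: "card (\<B> - {B1, B2}) = card \<B> - 2" using B less.prems(1) by (simp add: card_Diff_subset)
    have "card \<B> \<ge> 2"
    proof -
      have "{B1, B2} \<subseteq> \<B>" using B by auto
      then have "card {B1, B2} \<le> card \<B>" using less.prems(1) by (rule card_mono[rotated])
      then show ?thesis using B(3) by simp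
    qed
    moreover have "card \<B>' \<le> Suc (card (\<B> - {B1, B2}))" unfolding \<B>'_def using less.prems(1)
      by (simp add: card_insert_if)
    ultimately have lt: "card \<B>' < card \<B>" using c2 by linarith
    have gM: "good S M"
      unfolding good_def
    proof (intro conjI ballI)
      fix s assume s: "s \<in> S"
      have g1: "tight (B1 s)" "s \<notin> B1 s" using less.prems(2) B(1) s unfolding good_def by auto
      have g2: "tight (B2 s)" "s \<notin> B2 s" using less.prems(2) B(2) s unfolding good_def by auto
      have "B1 s \<inter> B2 s \<noteq> {}" using B(4) s unfolding core_def by blast
      moreover have "B1 s \<union> B2 s \<noteq> V" using g1 g2 s SV by auto
      ultimately show "tight (M s)" using cross[OF g1(1) g2(1)] unfolding M_def by blast
      show "s \<notin> M s" using g1 g2 M_def by auto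
    next
      show "core S M \<noteq> {}" using B(4) unfolding core_def M_def by blast
    qed
    obtain Z where Z: "Z \<subseteq> V" "\<Union>(core S ` \<B>') \<subseteq> Z" "Z \<inter> S = {}" "sum h Z \<le> 0"
      using less.hyps[OF lt] less.prems gM unfolding \<B>'_def by (metis finite_Diff finite_insert insert_iff DiffD1)
    have "core S B1 \<subseteq> core S M" "core S B2 \<subseteq> core S M" unfolding core_def M_def by auto
    then have "\<Union>(core S ` \<B>) \<subseteq> \<Union>(core S ` \<B>')" unfolding \<B>'_def by blast
    then show ?thesis using Z by blast
  next
    case False
    define Z where "Z = \<Union>(core S ` \<B>)"
    have coreV: "core S B \<subseteq> V" if "B \<in> \<B>" for B
    proof -
      obtain s where s: "s \<in> S" using Sne by blast
      have "core S B \<subseteq> B s" unfolding core_def using s by blast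
      also have "B s \<subseteq> V" using less.prems(2) that s tightV unfolding good_def by blast
      finally show ?thesis .
    qed
    have ZV: "Z \<subseteq> V" unfolding Z_def using coreV by blast
    have ZS: "Z \<inter> S = {}"
    proof -
      have "s \<notin> core S B" if "B \<in> \<B>" "s \<in> S" for B s
        using less.prems(2) that unfolding good_def core_def by blast
      then show ?thesis unfolding Z_def by blast
    qed
    have sZ: "sum h Z = (\<Sum>B\<in>\<B>. sum h (core S B))"
      unfolding Z_def
      by (rule sum.UNION_disjoint) (use less.prems(1) False coreV finV in \<open>auto intro: finite_subset[OF coreV finV]\<close>)
    have "sum h (core S B) \<le> 0" if B: "B \<in> \<B>" for B
    proof -
      obtain u where u: "u \<in> core S B" using less.prems(2) B unfolding good_def by blast
      show ?thesis unfolding core_def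
        by (rule G1[where u=u]) (use less.prems(2) B Sne u finite_subset[OF SV finV] in \<open>auto simp: good_def core_def\<close>)
    qed
    then have "sum h Z \<le> 0" unfolding sZ by (simp add: sum_nonpos)
    then show ?thesis using ZV ZS Z_def by blast
  qed
qed

lemma separation:
  assumes SV: "S \<subseteq> V" and TV: "T \<subseteq> V"
    and sp: "\<forall>t\<in>T. \<forall>s\<in>S. \<exists>X. tight X \<and> t \<in> X \<and> s \<notin> X"
  shows "\<exists>Z\<subseteq>V. T \<subseteq> Z \<and> Z \<inter> S = {} \<and> sum h Z \<le> 0"
proof (cases "S = {}")
  case True then show ?thesis using TV hV by (intro exI[of _ V]) auto
next
  case False
  define Bt where "Bt t = (\<lambda>s. SOME X. tight X \<and> t \<in> X \<and> s \<notin> X)" for t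
  have Bt: "tight (Bt t s) \<and> t \<in> Bt t s \<and> s \<notin> Bt t s" if "t \<in> T" "s \<in> S" for t s
    unfolding Bt_def using someI_ex[OF sp[rule_format, OF that]] by blast
  have ct: "t \<in> core S (Bt t)" if "t \<in> T" for t using Bt that unfolding core_def by blast
  have g: "\<forall>B\<in>Bt ` T. good S B" using Bt ct unfolding good_def by blast
  obtain Z where Z: "Z \<subseteq> V" "\<Union>(core S ` (Bt ` T)) \<subseteq> Z" "Z \<inter> S = {}" "sum h Z \<le> 0"
    using blocks[OF SV False _ g] TV finite_subset[OF TV finV] by blast
  have "T \<subseteq> Z" using Z(2) ct by blast
  then show ?thesis using Z by blast
qed

end



lemma path_cross:
  "dir_path A ends D s t p \<Longrightarrow> s \<notin> X \<Longrightarrow> t \<in> X \<Longrightarrow>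
   \<exists>e\<in>set p. head ends D e \<in> X \<and> tail ends D e \<notin> X"
proof (induction p arbitrary: s)
  case Nil then show ?case unfolding dir_path_def by simp
next
  case (Cons e p)
  note c = dp_Cons[OF Cons.prems(1)]
  show ?case
  proof (cases "head ends D e \<in> X")
    case True then show ?thesis using c Cons.prems by auto
  next
    case False then show ?thesis using Cons.IH[of "head ends D e"] c Cons.prems by auto
  qed
qed

lemma adp_cut:
  assumes adp: "arc_disjoint_paths j E ends D s t" and fin: "finite E" and X: "s \<notin> X" "t \<in> X"
  shows "j \<le> cutin E ends D X"
proof -
  obtain P where P: "\<forall>i<j. dir_path E ends D s t (P i)" "\<forall>i<j. \<forall>i'<j. i \<noteq> i' \<longrightarrow> set (P i) \<inter> set (P i') = {}"
    using adp unfolding arc_disjoint_paths_def by blast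
  define c where "c i = (SOME e. e \<in> set (P i) \<and> head ends D e \<in> X \<and> tail ends D e \<notin> X)" for i
  have c: "c i \<in> set (P i) \<and> head ends D (c i) \<in> X \<and> tail ends D (c i) \<notin> X" if "i < j" for i
    unfolding c_def by (rule someI_ex) (use path_cross[OF P(1)[rule_format, OF that] X] in blast)
  have inj: "inj_on c {..<j}"
  proof (rule inj_onI)
    fix i i' assume "i \<in> {..<j}" "i' \<in> {..<j}" "c i = c i'"
    then show "i = i'" using c P(2) by (metis disjoint_iff lessThan_iff)
  qed
  have sub: "c ` {..<j} \<subseteq> {e\<in>E. head ends D e \<in> X \<and> tail ends D e \<notin> X}"
  proof
    fix e assume "e \<in> c ` {..<j}"
    then obtain i where i: "i < j" "e = c i" by auto
    have "set (P i) \<subseteq> E" using P(1) i(1) unfolding dir_path_def by blast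
    then show "e \<in> {e\<in>E. head ends D e \<in> X \<and> tail ends D e \<notin> X}" using c[OF i(1)] i(2) by auto
  qed
  have "j = card (c ` {..<j})" using card_image[OF inj] by simp
  also have "\<dots> \<le> cutin E ends D X" unfolding cutin_def by (rule card_mono[OF _ sub]) (use fin in auto)
  finally show ?thesis .
qed

lemma ereal_lt_int:
  assumes "x = -\<infinity> \<or> (\<exists>n::int. x = ereal (real_of_int n))" "x < ereal (real (a::nat))"
  shows "x \<le> ereal (real a - 1)"
proof (cases "x = -\<infinity>")
  case False
  then obtain n :: int where n: "x = ereal (real_of_int n)" using assms(1) by blast
  then have "real_of_int n < real a" using assms(2) by simp
  then have "n < int a" by linarith
  then have "real_of_int n \<le> real a - 1" by linarith
  then show ?thesis using n by simp
qed simp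

lemma ereal_gt_int:
  assumes "x = \<infinity> \<or> (\<exists>n::int. x = ereal (real_of_int n))" "ereal (real (a::nat)) < x"
  shows "ereal (real a + 1) \<le> x"
proof (cases "x = \<infinity>")
  case False
  then obtain n :: int where n: "x = ereal (real_of_int n)" using assms(1) by blast
  then have "real a < real_of_int n" using assms(2) by simp
  then have "int a < n" by linarith
  then have "real a + 1 \<le> real_of_int n" by linarith
  then show ?thesis using n by simp
qed simp

lemma inside_super:
  assumes "finite E"
  shows "inside E ends X + inside E ends Y \<le> inside E ends (X \<union> Y) + inside E ends (X \<inter> Y)"
proof -
  let ?I = "\<lambda>Z. {e\<in>E. fst (ends e) \<in> Z \<and> snd (ends e) \<in> Z}"
  have "card (?I X) + card (?I Y) = card (?I X \<union> ?I Y) + card (?I X \<inter> ?I Y)"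
    by (rule card_Un_Int) (use assms in auto)
  moreover have "?I X \<inter> ?I Y = ?I (X \<inter> Y)" by auto
  moreover have "card (?I X \<union> ?I Y) \<le> card (?I (X \<union> Y))" by (rule card_mono) (use assms in auto)
  ultimately show ?thesis unfolding inside_def by simp
qed



lemma easy_dir:
  fixes V :: "'a set" and E :: "'e set" and ends :: "'e \<Rightarrow> 'a \<times> 'a"
    and k :: nat and f g :: "'a \<Rightarrow> ereal" and D :: "'e \<Rightarrow> bool"
  assumes finV: "finite V" and finE: "finite E"
    and endsV: "\<forall>e\<in>E. fst (ends e) \<in> V \<and> snd (ends e) \<in> V"
    and fint: "\<forall>v\<in>V. f v = -\<infinity> \<or> (\<exists>n::int. f v = ereal (real_of_int n))"
    and gint: "\<forall>v\<in>V. g v = \<infinity> \<or> (\<exists>n::int. g v = ereal (real_of_int n))"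
    and kec: "k_edge_connected k V E ends D" and bnd: "fg_bounded V E ends f g D"
    and sV: "s \<in> V" and tV: "t \<in> V"
    and p1: "indeg E ends D s + 2 \<le> indeg E ends D t"
    and p2: "f t < ereal (real (indeg E ends D t))"
    and p3: "ereal (real (indeg E ends D s)) < g s"
    and adp: "arc_disjoint_paths (k + 1) E ends D s t"
  shows "\<exists>D1. (k_edge_connected k V E ends D1 \<and> fg_bounded V E ends f g D1) \<and>
     lex_less (indeg_desc V E ends D1) (indeg_desc V E ends D)"
proof -
  define m where "m = indeg E ends D"
  have st: "s \<noteq> t" using p1 by auto
  obtain P where P: "\<forall>i<k+1. dir_path E ends D s t (P i)"
    using adp unfolding arc_disjoint_paths_def by blast
  define p where "p = P 0"
  have p: "dir_path E ends D s t p" using P p_def by simp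
  define D1 where "D1 = flip D (set p)"
  define m1 where "m1 = indeg E ends D1"
  have iv: "int (m1 v) = int (m v) + (if v = s then 1 else 0) - (if v = t then 1 else 0)" for v
    using flip_path[OF finE order_refl p, of v] unfolding m1_def m_def D1_def by simp
  have m1s: "m1 s = m s + 1" using iv[of s] st by simp
  have m1t: "m1 t = m t - 1" using iv[of t] st p1 unfolding m_def by simp
  have m1o: "m1 v = m v" if "v \<noteq> s" "v \<noteq> t" for v using iv[of v] that by simp
  have kec1: "k_edge_connected k V E ends D1"
    unfolding k_edge_connected_def
  proof (intro allI impI)
    fix X assume X: "X \<subseteq> V \<and> X \<noteq> {} \<and> X \<noteq> V"
    have finX: "finite X" using X finV finite_subset by auto
    have kX: "k \<le> cutin E ends D X" using kec X unfolding k_edge_connected_def cutin_def by blast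
    have "(\<Sum>v\<in>X. int (m1 v)) = (\<Sum>v\<in>X. int (m v)) + (if s \<in> X then 1 else 0) - (if t \<in> X then 1 else 0)"
      using sum_shift[OF finX, of "\<lambda>v. int (m v)" s 1 t] iv by simp
    then have eq: "int (cutin E ends D1 X) = int (cutin E ends D X) + (if s \<in> X then 1 else 0) - (if t \<in> X then 1 else 0)"
      using cut_sum_int[OF finE finX, of ends D1] cut_sum_int[OF finE finX, of ends D]
      unfolding m_def m1_def by linarith
    have "k \<le> cutin E ends D1 X"
    proof (cases "t \<in> X \<and> s \<notin> X")
      case True
      then have "k + 1 \<le> cutin E ends D X" using adp_cut[OF adp finE] by blast
      then show ?thesis using eq True by simp
    next
      case False
      then show ?thesis using eq kX by (cases "s \<in> X"; cases "t \<in> X") auto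
    qed
    then show "k \<le> card {e \<in> E. head ends D1 e \<in> X \<and> tail ends D1 e \<notin> X}" unfolding cutin_def .
  qed
  have bnd1: "fg_bounded V E ends f g D1"
    unfolding fg_bounded_def
  proof
    fix v assume v: "v \<in> V"
    have b: "f v \<le> ereal (real (m v))" "ereal (real (m v)) \<le> g v" using bnd v unfolding fg_bounded_def m_def by auto
    have "f v \<le> ereal (real (m1 v)) \<and> ereal (real (m1 v)) \<le> g v"
    proof (cases "v = s")
      case True
      have "ereal (real (m s) + 1) \<le> g s" using ereal_gt_int[of "g s" "m s"] gint sV p3 unfolding m_def by auto
      moreover have "ereal (real (m s)) \<le> ereal (real (m s) + 1)" by simp
      then have "f s \<le> ereal (real (m s) + 1)" using b True order_trans by blast
      moreover have "real (m1 s) = real (m s) + 1" using m1s by simp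
      ultimately show ?thesis using True by simp
    next
      case False
      show ?thesis
      proof (cases "v = t")
        case True
        have "f t \<le> ereal (real (m t) - 1)" using ereal_lt_int[of "f t" "m t"] fint tV p2 unfolding m_def by auto
        moreover have "real (m t - 1) = real (m t) - 1" using p1 unfolding m_def by auto
        moreover have "ereal (real (m t) - 1) \<le> ereal (real (m t))" by simp
        then have "ereal (real (m t) - 1) \<le> g t" using b True order_trans by blast
        ultimately show ?thesis using True m1t by simp
      next
        case False
        then show ?thesis using m1o[OF \<open>v \<noteq> s\<close> False] b by simp
      qed
    qed
    then show "f v \<le> ereal (real (indeg E ends D1 v)) \<and> ereal (real (indeg E ends D1 v)) \<le> g v"
      unfolding m1_def .
  qed
  have lex: "lex_less (dl V m1) (dl V m)"
  proof (rule lex_fwd[OF finV, where \<beta> = "m t"])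
    show "\<forall>c>m t. card {v \<in> V. c \<le> m1 v} = card {v \<in> V. c \<le> m v}"
    proof (intro allI impI)
      fix c assume c: "m t < c"
      have "{v \<in> V. c \<le> m1 v} = {v \<in> V. c \<le> m v}"
      proof -
        have "(c \<le> m1 v) = (c \<le> m v)" for v
        proof -
          consider "v = s" | "v = t" | "v \<noteq> s" "v \<noteq> t" by blast
          then show ?thesis
          proof cases
            case 1 then show ?thesis using c m1s p1 unfolding m_def by auto
          next
            case 2 then show ?thesis using c m1t p1 st unfolding m_def by auto
          next
            case 3 then show ?thesis using m1o by simp
          qed
        qed
        then show ?thesis by simp
      qed
      then show "card {v \<in> V. c \<le> m1 v} = card {v \<in> V. c \<le> m v}" by simp
    qed
    have "{v \<in> V. m t \<le> m1 v} = {v \<in> V. m t \<le> m v} - {t}"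
    proof -
      have "\<not> m t \<le> m1 s" "\<not> m t \<le> m s" using m1s p1 unfolding m_def by auto
      moreover have "\<not> m t \<le> m1 t" using m1t p1 unfolding m_def by auto
      ultimately have "(m t \<le> m1 v) = (m t \<le> m v \<and> v \<noteq> t)" for v
        using m1o by (cases "v = s"; cases "v = t") auto
      then show ?thesis by auto
    qed
    moreover have "t \<in> {v \<in> V. m t \<le> m v}" using tV by simp
    ultimately show "card {v \<in> V. m t \<le> m1 v} < card {v \<in> V. m t \<le> m v}"
    proof -
      assume a: "{v \<in> V. m t \<le> m1 v} = {v \<in> V. m t \<le> m v} - {t}" "t \<in> {v \<in> V. m t \<le> m v}"
      show ?thesis unfolding a(1) by (rule card_Diff1_less[OF _ a(2)]) (use finV in auto)
    qed
  qed
  show ?thesis using kec1 bnd1 lex unfolding indeg_desc_dl m_def m1_def by blast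
qed



lemma hard_dir:
  fixes V :: "'a set" and E :: "'e set" and ends :: "'e \<Rightarrow> 'a \<times> 'a"
    and k :: nat and f g :: "'a \<Rightarrow> ereal" and D D' :: "'e \<Rightarrow> bool"
  assumes finV: "finite V" and finE: "finite E"
    and endsV: "\<forall>e\<in>E. fst (ends e) \<in> V \<and> snd (ends e) \<in> V"
    and kec: "k_edge_connected k V E ends D" and bnd: "fg_bounded V E ends f g D"
    and kec': "k_edge_connected k V E ends D'" and bnd': "fg_bounded V E ends f g D'"
    and lx: "lex_less (indeg_desc V E ends D') (indeg_desc V E ends D)"
  shows "\<exists>s\<in>V. \<exists>t\<in>V.
             indeg E ends D s + 2 \<le> indeg E ends D t \<and>
             f t < ereal (real (indeg E ends D t)) \<and>
             ereal (real (indeg E ends D s)) < g s \<and>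
             arc_disjoint_paths (k + 1) E ends D s t"
proof (rule ccontr)
  assume nop: "\<not> ?thesis"
  define m where "m = indeg E ends D"
  define m' where "m' = indeg E ends D'"
  obtain \<beta> where lev: "\<forall>c>\<beta>. card {v\<in>V. c \<le> m' v} \<le> card {v\<in>V. c \<le> m v}"
      and ltb: "card {v\<in>V. \<beta> \<le> m' v} < card {v\<in>V. \<beta> \<le> m v}"
    using lex_bwd[OF finV lx[unfolded indeg_desc_dl]] unfolding m_def m'_def by blast
  define T where "T = {v\<in>V. \<beta> \<le> m v \<and> f v < ereal (real (m v))}"
  define S where "S = {v\<in>V. m v + 2 \<le> \<beta> \<and> ereal (real (m v)) < g v}"
  define tight where "tight X \<longleftrightarrow> X \<subseteq> V \<and> X \<noteq> {} \<and> X \<noteq> V \<and> cutin E ends D X = k" for X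
  define h where "h v = int (m v) - int (m' v)" for v
  have kc: "k \<le> cutin E ends D X" if "X \<subseteq> V" "X \<noteq> {}" "X \<noteq> V" for X
    using kec that unfolding k_edge_connected_def cutin_def by blast
  have kc': "k \<le> cutin E ends D' X" if "X \<subseteq> V" "X \<noteq> {}" "X \<noteq> V" for X
    using kec' that unfolding k_edge_connected_def cutin_def by blast
  have cutV: "cutin E ends DD V = 0" for DD
  proof -
    have h: "{e\<in>E. head ends DD e \<in> V \<and> tail ends DD e \<notin> V} = {}"
      using endsV by (auto simp: tail_def)
    show ?thesis unfolding cutin_def h by simp
  qed
  have sumh: "sum h X = int (cutin E ends D X) - int (cutin E ends D' X)" if "X \<subseteq> V" for X
  proof -
    have finX: "finite X" using that finV finite_subset by auto
    show ?thesis unfolding h_def m_def m'_def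
      using cut_sum_int[OF finE finX, of ends D] cut_sum_int[OF finE finX, of ends D'] 
      by (simp add: sum_subtractf)
  qed
  have ss: "sep_setup V tight h"
  proof
    show "finite V" by (rule finV)
    show "\<And>X. tight X \<Longrightarrow> X \<subseteq> V" unfolding tight_def by blast
    show "sum h X \<le> 0" if "tight X" for X
      using sumh[of X] kc'[of X] that unfolding tight_def by simp
    show "sum h V = 0" using sumh[of V] cutV by simp
    show "tight (X \<inter> Y) \<and> tight (X \<union> Y)"
      if X: "tight X" and Y: "tight Y" and ne: "X \<inter> Y \<noteq> {}" and nv: "X \<union> Y \<noteq> V" for X Y
    proof -
      have XV: "X \<subseteq> V" "Y \<subseteq> V" "X \<noteq> V" using X Y unfolding tight_def by auto
      have fX: "finite X" "finite Y" using XV finV finite_subset by auto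
      have c1: "k \<le> cutin E ends D (X \<inter> Y)" using kc[of "X \<inter> Y"] XV ne by blast
      have c2: "k \<le> cutin E ends D (X \<union> Y)" using kc[of "X \<union> Y"] XV ne nv by blast
      have sm: "(\<Sum>v\<in>X \<union> Y. int (m v)) + (\<Sum>v\<in>X \<inter> Y. int (m v)) = (\<Sum>v\<in>X. int (m v)) + (\<Sum>v\<in>Y. int (m v))"
        by (rule sum.union_inter[OF fX])
      have ins: "inside E ends X + inside E ends Y \<le> inside E ends (X \<union> Y) + inside E ends (X \<inter> Y)"
        by (rule inside_super[OF finE])
      have "int (cutin E ends D (X \<union> Y)) + int (cutin E ends D (X \<inter> Y)) \<le>
            int (cutin E ends D X) + int (cutin E ends D Y)"
        using cut_sum_int[OF finE fX(1), of ends D] cut_sum_int[OF finE fX(2), of ends D]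
          cut_sum_int[OF finE finite_Un[THEN iffD2, OF conjI[OF fX]], of ends D]
          cut_sum_int[OF finE finite_Int[OF disjI1[OF fX(1)]], of ends D Y] sm ins
        unfolding m_def by linarith
      then have "cutin E ends D (X \<union> Y) = k \<and> cutin E ends D (X \<inter> Y) = k"
        using c1 c2 X Y unfolding tight_def by linarith
      then show ?thesis unfolding tight_def using XV ne nv by auto
    qed
  qed
  have SV: "S \<subseteq> V" and TV: "T \<subseteq> V" unfolding S_def T_def by auto
  have sp: "\<forall>t\<in>T. \<forall>s\<in>S. \<exists>X. tight X \<and> t \<in> X \<and> s \<notin> X"
  proof (intro ballI)
    fix t s assume t: "t \<in> T" and s: "s \<in> S"
    have st: "s \<noteq> t" using s t unfolding S_def T_def by auto
    have sV: "s \<in> V" and tV: "t \<in> V" using s t SV TV by auto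
    have "\<not> arc_disjoint_paths (k + 1) E ends D s t"
      using nop sV tV s t unfolding S_def T_def m_def by fastforce
    moreover have ms: "menger_setup V E ends s t"
      by (unfold_locales) (use finV finE endsV sV tV st in auto)
    ultimately obtain X where X: "X \<subseteq> V" "t \<in> X" "s \<notin> X" "\<not> k + 1 \<le> cutin E ends D X"
      using menger_setup.menger[OF ms, of "k + 1" D] by blast
    have "X \<noteq> {}" "X \<noteq> V" using X sV by auto
    then have "tight X" using kc[of X] X unfolding tight_def by simp
    then show "\<exists>X. tight X \<and> t \<in> X \<and> s \<notin> X" using X by blast
  qed
  obtain Z where Z: "Z \<subseteq> V" "T \<subseteq> Z" "Z \<inter> S = {}" "sum h Z \<le> 0"
    using sep_setup.separation[OF ss SV TV sp] by blast
  have hZ1: "\<forall>v\<in>Z. m v + 2 \<le> \<beta> \<longrightarrow> m' v \<le> m v"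
  proof (intro ballI impI)
    fix v assume v: "v \<in> Z" "m v + 2 \<le> \<beta>"
    then have "v \<notin> S" "v \<in> V" using Z by auto
    then have "g v \<le> ereal (real (m v))" using v unfolding S_def by auto
    moreover have "ereal (real (m' v)) \<le> g v" using bnd' \<open>v \<in> V\<close> unfolding fg_bounded_def m'_def by auto
    ultimately show "m' v \<le> m v" by (metis ereal_less_eq(3) of_nat_le_iff order_trans)
  qed
  have hZ2: "\<forall>v\<in>V - Z. \<beta> \<le> m v \<longrightarrow> m v \<le> m' v"
  proof (intro ballI impI)
    fix v assume v: "v \<in> V - Z" "\<beta> \<le> m v"
    then have "v \<notin> T" using Z by auto
    then have "ereal (real (m v)) \<le> f v" using v unfolding T_def by auto
    moreover have "f v \<le> ereal (real (m' v))" using bnd' v unfolding fg_bounded_def m'_def by auto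
    ultimately show "m v \<le> m' v" by (metis ereal_less_eq(3) of_nat_le_iff order_trans)
  qed
  have "(\<Sum>v\<in>Z. int (m' v)) < (\<Sum>v\<in>Z. int (m v))"
    by (rule count_main[OF finV Z(1) lev ltb hZ1 hZ2])
  then have "sum h Z > 0" unfolding h_def by (simp add: sum_subtractf)
  then show False using Z(4) by simp
qed

theorem theorem6p8:
  fixes V :: "'a set" and E :: "'e set" and ends :: "'e \<Rightarrow> 'a \<times> 'a"
    and k :: nat and f g :: "'a \<Rightarrow> ereal" and D :: "'e \<Rightarrow> bool"
  assumes "finite V" and "finite E"
    and "\<forall>e\<in>E. fst (ends e) \<in> V \<and> snd (ends e) \<in> V"
    and "k > 0"
    and "\<forall>v\<in>V. f v = -\<infinity> \<or> (\<exists>n::int. f v = ereal (real_of_int n))"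
    and "\<forall>v\<in>V. g v = \<infinity> \<or> (\<exists>n::int. g v = ereal (real_of_int n))"
    and "\<forall>v\<in>V. f v \<le> g v"
    and "k_edge_connected k V E ends D" and "fg_bounded V E ends f g D"
  shows "dec_min V E ends (\<lambda>D'. k_edge_connected k V E ends D' \<and> fg_bounded V E ends f g D') D
     \<longleftrightarrow> \<not> (\<exists>s\<in>V. \<exists>t\<in>V.
             indeg E ends D s + 2 \<le> indeg E ends D t \<and>
             f t < ereal (real (indeg E ends D t)) \<and>
             ereal (real (indeg E ends D s)) < g s \<and>
             arc_disjoint_paths (k + 1) E ends D s t)"
proof
  assume dm: "dec_min V E ends (\<lambda>D'. k_edge_connected k V E ends D' \<and> fg_bounded V E ends f g D') D"
  show "\<not> (\<exists>s\<in>V. \<exists>t\<in>V.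
             indeg E ends D s + 2 \<le> indeg E ends D t \<and>
             f t < ereal (real (indeg E ends D t)) \<and>
             ereal (real (indeg E ends D s)) < g s \<and>
             arc_disjoint_paths (k + 1) E ends D s t)"
  proof
    assume "\<exists>s\<in>V. \<exists>t\<in>V.
             indeg E ends D s + 2 \<le> indeg E ends D t \<and>
             f t < ereal (real (indeg E ends D t)) \<and>
             ereal (real (indeg E ends D s)) < g s \<and>
             arc_disjoint_paths (k + 1) E ends D s t"
    then obtain s t where st: "s \<in> V" "t \<in> V" "indeg E ends D s + 2 \<le> indeg E ends D t"
      "f t < ereal (real (indeg E ends D t))" "ereal (real (indeg E ends D s)) < g s"
      "arc_disjoint_paths (k + 1) E ends D s t" by blast
    obtain D1 where "(k_edge_connected k V E ends D1 \<and> fg_bounded V E ends f g D1) \<and>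
        lex_less (indeg_desc V E ends D1) (indeg_desc V E ends D)"
      using easy_dir[OF assms(1,2,3,5,6,8,9) st] by blast
    then show False using dm unfolding dec_min_def by blast
  qed
next
  assume np: "\<not> (\<exists>s\<in>V. \<exists>t\<in>V.
             indeg E ends D s + 2 \<le> indeg E ends D t \<and>
             f t < ereal (real (indeg E ends D t)) \<and>
             ereal (real (indeg E ends D s)) < g s \<and>
             arc_disjoint_paths (k + 1) E ends D s t)"
  show "dec_min V E ends (\<lambda>D'. k_edge_connected k V E ends D' \<and> fg_bounded V E ends f g D') D"
    unfolding dec_min_def
  proof (rule conjI)
    show "k_edge_connected k V E ends D \<and> fg_bounded V E ends f g D" using assms(8,9) by blast
  next
    show "\<not> (\<exists>D'. (k_edge_connected k V E ends D' \<and> fg_bounded V E ends f g D') \<and>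
        lex_less (indeg_desc V E ends D') (indeg_desc V E ends D))"
    proof
    assume "\<exists>D'. (k_edge_connected k V E ends D' \<and> fg_bounded V E ends f g D') \<and>
        lex_less (indeg_desc V E ends D') (indeg_desc V E ends D)"
    then obtain D' where D': "k_edge_connected k V E ends D'" "fg_bounded V E ends f g D'"
        "lex_less (indeg_desc V E ends D') (indeg_desc V E ends D)" by blast
    show False using hard_dir[OF assms(1,2,3,8,9) D'] np by blast
    qed
  qed
qed

end
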